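(* Let $(a_i)$ be a real sequence and $t=(t_i)$ an increasing real sequence with the same index set. Then $t\in T_a$ if and only if $$\sum_{i=1}^n\big(a_{\lfloor p_i\rfloor_t}-a_{\lfloor q_i\rfloor_t}\big)\le\sum_{i=1}^n\left(\{q_i\}_t\frac{\Delta a_{\lfloor q_i\rfloor_t}}{\Delta t_{\lfloor q_i\rfloor_t}}-\{p_i\}_t\frac{\Delta a_{\lfloor p_i\rfloor_t}}{\Delta t_{\lfloor p_i\rfloor_t}}\right)$$ holds for all $n\ge2$ and all $(p_1,\dots,p_n),(q_1,\dots,q_n)\in I_t^n$ with $(p_1,\dots,p_n)\prec(q_1,\dots,q_n)$ (a term with $\{q\}_t=0$ is interpreted as $0$, even when $\lfloor q\rfloor_t$ is the last index).
   Context: For a real sequence $(x_i)$, $\Delta x_i=x_{i+1}-x_i$. "Increasing" means strictly increasing. $T_a$ is the set of increasing real sequences $t=(t_i)$ with the same index set as $a$ such that $(\Delta a_i/\Delta t_i)$ is non-decreasing. For increasing $t$: $I_t=[t_1,t_N]$ if $t=(t_1,\dots,t_N)$ is finite, and $I_t=[t_1,\lim_{i\to\infty}t_i)$ if $t$ is infinite. For $q\in I_t$, $\lfloor q\rfloor_t$ is the index $i$ of the largest $t_i$ with $t_i\le q$, and $\{q\}_t=q-t_{\lfloor q\rfloor_t}$. For $x,y\in\mathbb{R}^n$, with components in decreasing order $x_{[1]}\ge\dots\ge x_{[n]}$, $y_{[1]}\ge\dots\ge y_{[n]}$, $x\prec y$ means $\sum_{i=1}^k x_{[i]}\le\sum_{i=1}^k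 y_{[i]}$ for $k=1,\dots,n-1$ and $\sum_{i=1}^n x_i=\sum_{i=1}^n y_i$. *)

theory Defs
  imports Complex_Main
begin

text \<open>Sequences are functions nat => real; the index set J is either {1..N} (N >= 1)
  or {1..} (infinite sequence).\<close>

definition valid_index_set :: "nat set \<Rightarrow> bool" where
  "valid_index_set J \<longleftrightarrow> (\<exists>N\<ge>1. J = {1..N}) \<or> J = {1..}"

definition Delta :: "(nat \<Rightarrow> real) \<Rightarrow> nat \<Rightarrow> real" where
  "Delta x i = x (Suc i) - x i"

definition increasing_on :: "nat set \<Rightarrow> (nat \<Rightarrow> real) \<Rightarrow> bool" where
  "increasing_on J t \<longleftrightarrow> (\<forall>i\<in>J. \<forall>j\<in>J. i < j \<longrightarrow> t i < t j)"

text \<open>The set T_a: increasing t such that (Delta a_i / Delta t_i) is non-decreasing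
  (indices i of the difference sequence: i and i+1 both in J).\<close>
definition T_set :: "nat set \<Rightarrow> (nat \<Rightarrow> real) \<Rightarrow> (nat \<Rightarrow> real) set" where
  "T_set J a = {t. increasing_on J t \<and>
     (\<forall>i j. i \<in> J \<and> Suc j \<in> J \<and> i \<le> j \<longrightarrow>
        Delta a i / Delta t i \<le> Delta a j / Delta t j)}"

text \<open>I_t = [t_1, t_N] if finite, [t_1, lim t_i) if infinite (the limit may be +infinity,
  so [t_1, lim t_i) is the set of q >= t_1 lying below some t_i).\<close>
definition I_set :: "nat set \<Rightarrow> (nat \<Rightarrow> real) \<Rightarrow> real set" where
  "I_set J t = (if finite J then {t 1 .. t (Max J)}
               else {q. t 1 \<le> q \<and> (\<exists>i\<in>J. q < t i)})"

definition floor_t :: "nat set \<Rightarrow> (nat \<Rightarrow> real) \<Rightarrow> real \<Rightarrow> nat" where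
  "floor_t J t q = (THE i. i \<in> J \<and> t i \<le> q \<and> (\<forall>j\<in>J. t j \<le> q \<longrightarrow> t j \<le> t i))"

definition frac_t :: "nat set \<Rightarrow> (nat \<Rightarrow> real) \<Rightarrow> real \<Rightarrow> real" where
  "frac_t J t q = q - t (floor_t J t q)"

definition slope_term :: "nat set \<Rightarrow> (nat \<Rightarrow> real) \<Rightarrow> (nat \<Rightarrow> real) \<Rightarrow> real \<Rightarrow> real" where
  "slope_term J a t q = (if frac_t J t q = 0 then 0
     else frac_t J t q * (Delta a (floor_t J t q) / Delta t (floor_t J t q)))"

definition majorized :: "real list \<Rightarrow> real list \<Rightarrow> bool" where
  "majorized xs ys \<longleftrightarrow> length xs = length ys \<and>
     (\<forall>k\<in>{1..<length xs}. sum_list (take k (rev (sort xs))) \<le> sum_list (take k (rev (sort ys)))) \<and>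
     sum_list xs = sum_list ys"

end

theory Submission imports Defs "HOL-Library.Multiset" begin


lemma sum_list_map_perm:
  "mset xs = mset ys \<Longrightarrow> sum_list (map g xs) = sum_list (map (g::real\<Rightarrow>real) ys)"
  by (metis mset_map sum_mset_sum_list)

lemma sum_nth_list: "(\<Sum>i<length xs. g (xs!i)) = sum_list (map (g::real\<Rightarrow>real) xs)"
  by (simp add: sum_list_sum_nth atLeast0LessThan)

lemma take_bound:
  "k \<le> length xs \<Longrightarrow> sum_list (take k xs) - real k * c \<le> sum_list (map (\<lambda>x. max (x - c) 0) xs)"
proof (induction xs arbitrary: k)
  case Nil then show ?case by simp
next
  case (Cons x xs)
  show ?case
  proof (cases k)
    case 0
    have "0 \<le> sum_list (map (\<lambda>x. max (x - c) 0) xs)" by (rule sum_list_nonneg) auto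
    then show ?thesis using 0 by simp
  next
    case (Suc k')
    with Cons have "sum_list (take k' xs) - real k' * c \<le> sum_list (map (\<lambda>x. max (x - c) 0) xs)" by simp
    then show ?thesis using Suc by (simp add: algebra_simps)
  qed
qed

lemma sum_minus_c: "sum_list (map (\<lambda>x. x - c) A) = sum_list A - real (length A) * (c::real)"
  by (induction A) (auto simp: algebra_simps)

lemma maj_plus:
  assumes "majorized p q"
  shows "(\<Sum>i<length p. max (p!i - c) 0) \<le> (\<Sum>i<length q. max (q!i - c) 0)"
proof -
  define g where "g = (\<lambda>x::real. max (x - c) 0)"
  define ps where "ps = rev (sort p)"
  define qs where "qs = rev (sort q)"
  define A where "A = takeWhile (\<lambda>x. x > c) ps"
  define B where "B = dropWhile (\<lambda>x. x > c) ps"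
  define k where "k = length A"
  have len: "length p = length q" using assms by (simp add: majorized_def)
  have lps: "length ps = length p" and lqs: "length qs = length q" by (simp_all add: ps_def qs_def)
  have psAB: "ps = A @ B" by (simp add: A_def B_def)
  have srt: "sorted_wrt (\<ge>) ps" unfolding ps_def by (simp add: sorted_wrt_rev)
  have Bc: "\<forall>x\<in>set B. x \<le> c"
  proof (cases B)
    case Nil then show ?thesis by simp
  next
    case (Cons b B')
    have "\<not> b > c" using Cons unfolding B_def by (metis dropWhile_eq_Cons_conv)
    moreover have "sorted_wrt (\<ge>) B" using srt psAB by (simp add: sorted_wrt_append)
    ultimately show ?thesis using Cons by auto
  qed
  have Ac: "\<forall>x\<in>set A. x > c" unfolding A_def by (meson set_takeWhileD)
  have "sum_list (map g A) = sum_list (map (\<lambda>x. x - c) A)"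
    using Ac by (intro arg_cong[where f=sum_list] map_cong) (auto simp: g_def)
  also have "\<dots> = sum_list A - real k * c" by (simp add: sum_minus_c k_def)
  finally have SA: "sum_list (map g A) = sum_list A - real k * c" .
  have "sum_list (map g B) = sum_list (map (\<lambda>x. 0) B)"
    using Bc by (intro arg_cong[where f=sum_list] map_cong) (auto simp: g_def)
  hence SB: "sum_list (map g B) = 0" by simp
  have tk: "take k ps = A" using psAB k_def by simp
  have L: "sum_list (map g ps) = sum_list (take k ps) - real k * c"
    using SA SB tk psAB by simp
  have kle: "k \<le> length p" using lps psAB k_def by simp
  have mid: "sum_list (take k ps) \<le> sum_list (take k qs)"
  proof (cases "k = 0")
    case True then show ?thesis by simp
  next
    case False
    show ?thesis
    proof (cases "k = length p")
      case True
      have "sum_list ps = sum_list p" unfolding ps_def by (metis mset_rev mset_sort sum_mset_sum_list)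
      moreover have "sum_list qs = sum_list q" unfolding qs_def by (metis mset_rev mset_sort sum_mset_sum_list)
      ultimately show ?thesis using True lps lqs len assms by (simp add: majorized_def)
    next
      case F2: False
      then have "k \<in> {1..<length p}" using False kle by auto
      then show ?thesis using assms unfolding majorized_def ps_def qs_def by blast
    qed
  qed
  have R: "sum_list (take k qs) - real k * c \<le> sum_list (map g qs)"
    unfolding g_def by (rule take_bound) (use kle len lqs in simp)
  have "sum_list (map g ps) = sum_list (map g p)" unfolding ps_def
    by (rule sum_list_map_perm) simp
  moreover have "sum_list (map g qs) = sum_list (map g q)" unfolding qs_def
    by (rule sum_list_map_perm) simp
  ultimately have "sum_list (map g p) \<le> sum_list (map g q)" using L mid R by linarith
  then show ?thesis using sum_nth_list[of g p] sum_nth_list[of g q] by (simp add: g_def)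
qed



lemma kar:
  assumes "majorized p q" "finite K" "\<forall>k\<in>K. c k \<ge> (0::real)"
  shows "(\<Sum>i<length p. A + B*(p!i) + (\<Sum>k\<in>K. c k * max (p!i - d k) 0))
       \<le> (\<Sum>i<length q. A + B*(q!i) + (\<Sum>k\<in>K. c k * max (q!i - d k) 0))"
proof -
  have len: "length p = length q" and sm: "sum_list p = sum_list q" using assms(1) by (auto simp: majorized_def)
  have e: "(\<Sum>i<length xs. A + B*(xs!i) + (\<Sum>k\<in>K. c k * max (xs!i - d k) 0))
     = real (length xs) * A + B * sum_list xs + (\<Sum>k\<in>K. c k * (\<Sum>i<length xs. max (xs!i - d k) 0))" for xs
    by (simp add: sum.distrib sum_distrib_left sum_list_sum_nth atLeast0LessThan sum.swap[of _ K])
  have "(\<Sum>k\<in>K. c k * (\<Sum>i<length p. max (p!i - d k) 0)) \<le> (\<Sum>k\<in>K. c k * (\<Sum>i<length q. max (q!i - d k) 0))"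
    by (rule sum_mono, rule mult_left_mono) (use maj_plus[OF assms(1)] assms(3) in auto)
  then show ?thesis unfolding e using len sm by simp
qed

definition sl :: "(nat \<Rightarrow> real) \<Rightarrow> (nat \<Rightarrow> real) \<Rightarrow> nat \<Rightarrow> real" where
  "sl a t k = Delta a k / Delta t k"

definition GG :: "(nat \<Rightarrow> real) \<Rightarrow> (nat \<Rightarrow> real) \<Rightarrow> nat \<Rightarrow> real \<Rightarrow> real" where
  "GG a t M r = a 1 + sl a t 1 * (r - t 1) + (\<Sum>k\<in>{2..M}. (sl a t k - sl a t (k-1)) * max (r - t k) 0)"

lemma vJ_down: "valid_index_set J \<Longrightarrow> i \<in> J \<Longrightarrow> 1 \<le> j \<Longrightarrow> j \<le> i \<Longrightarrow> j \<in> J"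
  by (auto simp: valid_index_set_def)
lemma vJ_1: "valid_index_set J \<Longrightarrow> 1 \<in> J"
  by (auto simp: valid_index_set_def)
lemma vJ_ge1: "valid_index_set J \<Longrightarrow> i \<in> J \<Longrightarrow> 1 \<le> i"
  by (auto simp: valid_index_set_def)
lemma vJ_inf: "valid_index_set J \<Longrightarrow> infinite J \<Longrightarrow> J = {1..}"
  by (auto simp: valid_index_set_def)
lemma vJ_fin: "valid_index_set J \<Longrightarrow> finite J \<Longrightarrow> J = {1..Max J} \<and> Max J \<ge> 1"
proof -
  assume "valid_index_set J" "finite J"
  then obtain N where N: "N \<ge> 1" "J = {1..N}" by (auto simp: valid_index_set_def infinite_Ici)
  have "Max {1..N} = N" using N(1) by (intro Max_eqI) auto
  then show ?thesis using N by simp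
qed

lemma inc_mono: "increasing_on J t \<Longrightarrow> i\<in>J \<Longrightarrow> j\<in>J \<Longrightarrow> i \<le> j \<Longrightarrow> t i \<le> t j"
  by (metis increasing_on_def le_less order_refl)

lemma floor_eq:
  assumes "increasing_on J t" "m \<in> J" "t m \<le> r" "\<forall>j\<in>J. t j \<le> r \<longrightarrow> j \<le> m"
  shows "floor_t J t r = m"
  unfolding floor_t_def
proof (rule the_equality)
  show "m \<in> J \<and> t m \<le> r \<and> (\<forall>j\<in>J. t j \<le> r \<longrightarrow> t j \<le> t m)"
    using assms inc_mono[OF assms(1)] by auto
next
  fix i assume i: "i \<in> J \<and> t i \<le> r \<and> (\<forall>j\<in>J. t j \<le> r \<longrightarrow> t j \<le> t i)"
  then have "t m \<le> t i" "i \<le> m" using assms by auto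
  then show "i = m" using i assms(1,2) unfolding increasing_on_def
    by (metis le_neq_implies_less not_le)
qed

lemma floor_mid:
  assumes "increasing_on J t" "m \<in> J" "Suc m \<in> J" "t m \<le> r" "r < t (Suc m)"
  shows "floor_t J t r = m"
proof (rule floor_eq[OF assms(1,2,4)], intro ballI impI)
  fix j assume "j \<in> J" "t j \<le> r"
  show "j \<le> m"
  proof (rule ccontr)
    assume "\<not> j \<le> m"
    then have "t (Suc m) \<le> t j" using inc_mono[OF assms(1) assms(3) \<open>j\<in>J\<close>] by simp
    then show False using assms(5) \<open>t j \<le> r\<close> by simp
  qed
qed

lemma fv_mid:
  assumes "increasing_on J t" "m \<in> J" "Suc m \<in> J" "t m \<le> r" "r < t (Suc m)"
  shows "a (floor_t J t r) + slope_term J a t r = a m + sl a t m * (r - t m)"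
  using floor_mid[OF assms] by (simp add: slope_term_def frac_t_def sl_def)

lemma fv_last:
  assumes "increasing_on J t" "finite J" "Max J \<in> J"
  shows "a (floor_t J t (t (Max J))) + slope_term J a t (t (Max J)) = a (Max J)"
proof -
  have "floor_t J t (t (Max J)) = Max J"
    by (rule floor_eq) (use assms in auto)
  then show ?thesis by (simp add: slope_term_def frac_t_def)
qed

lemma ex_seg: fixes t :: "nat \<Rightarrow> real" shows "1 \<le> L \<Longrightarrow> t 1 \<le> r \<Longrightarrow> r < t L \<Longrightarrow> \<exists>m\<ge>1. m < L \<and> t m \<le> r \<and> r < t (Suc m)"
proof (induction L)
  case 0 then show ?case by simp
next
  case (Suc L)
  show ?case
  proof (cases "L = 0")
    case True then show ?thesis using Suc.prems by simp
  next
    case False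
    show ?thesis
    proof (cases "r < t L")
      case True
      then obtain m where "m \<ge> 1" "m < L" "t m \<le> r" "r < t (Suc m)" using Suc False by auto
      then show ?thesis by (intro exI[of _ m]) auto
    next
      case F: False
      then show ?thesis using Suc False by (intro exI[of _ L]) auto
    qed
  qed
qed

lemma H_lemma:
  "(\<forall>i. 1 \<le> i \<longrightarrow> i < m \<longrightarrow> t i < t (Suc i)) \<Longrightarrow> 1 \<le> m \<Longrightarrow>
   a 1 + sl a t 1 * (q - t 1) + (\<Sum>k\<in>{2..m}. (sl a t k - sl a t (k-1)) * (q - t k)) = a m + sl a t m * (q - t m)"
proof (induction m)
  case 0 then show ?case by simp
next
  case (Suc m)
  show ?case
  proof (cases "m = 0")
    case True then show ?thesis by simp
  next
    case False
    have IH: "a 1 + sl a t 1 * (q - t 1) + (\<Sum>k\<in>{2..m}. (sl a t k - sl a t (k-1)) * (q - t k)) = a m + sl a t m * (q - t m)"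
      using Suc False by auto
    have ne: "t (Suc m) - t m \<noteq> 0" using Suc.prems(1)[rule_format, of m] False by simp
    have key: "sl a t m * (t (Suc m) - t m) = a (Suc m) - a m"
      using ne by (simp add: sl_def Delta_def)
    have "(\<Sum>k\<in>{2..Suc m}. (sl a t k - sl a t (k-1)) * (q - t k))
        = (\<Sum>k\<in>{2..m}. (sl a t k - sl a t (k-1)) * (q - t k)) + (sl a t (Suc m) - sl a t m) * (q - t (Suc m))"
      using False by (simp add: sum.cl_ivl_Suc)
    then show ?thesis using IH key by (simp add: algebra_simps)
  qed
qed

lemma G_eq:
  assumes vJ: "valid_index_set J" and inc: "increasing_on J t" and SM: "Suc M \<in> J"
    and m: "1 \<le> m" "m \<le> M" and r: "t m \<le> r" "r \<le> t (Suc m)"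
  shows "GG a t M r = a m + sl a t m * (r - t m)"
proof -
  have inJ: "j \<in> J" if "1 \<le> j" "j \<le> Suc M" for j using vJ_down[OF vJ SM that] .
  have split: "{2..M} = {2..m} \<union> {Suc m..M}" using m by auto
  have s2: "(\<Sum>k\<in>{Suc m..M}. (sl a t k - sl a t (k-1)) * max (r - t k) 0) = 0"
  proof (rule sum.neutral, intro ballI)
    fix k assume k: "k \<in> {Suc m..M}"
    have "t (Suc m) \<le> t k" using inc_mono[OF inc, of "Suc m" k] inJ k m by auto
    then show "(sl a t k - sl a t (k-1)) * max (r - t k) 0 = 0" using r by simp
  qed
  have s1: "(\<Sum>k\<in>{2..m}. (sl a t k - sl a t (k-1)) * max (r - t k) 0)
      = (\<Sum>k\<in>{2..m}. (sl a t k - sl a t (k-1)) * (r - t k))"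
  proof (rule sum.cong[OF refl])
    fix k assume k: "k \<in> {2..m}"
    have "t k \<le> t m" using inc_mono[OF inc, of k m] inJ k m by auto
    then show "(sl a t k - sl a t (k-1)) * max (r - t k) 0 = (sl a t k - sl a t (k-1)) * (r - t k)"
      using r by simp
  qed
  have hyp: "\<forall>i. 1 \<le> i \<longrightarrow> i < m \<longrightarrow> t i < t (Suc i)"
    using inc inJ m unfolding increasing_on_def by auto
  have "GG a t M r = a 1 + sl a t 1 * (r - t 1) + (\<Sum>k\<in>{2..m}. (sl a t k - sl a t (k-1)) * (r - t k))"
    unfolding GG_def split using s1 s2 by (subst sum.union_disjoint) auto
  also have "\<dots> = a m + sl a t m * (r - t m)" by (rule H_lemma[OF hyp m(1)])
  finally show ?thesis .
qed



lemma fv_G: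
  assumes vJ: "valid_index_set J" and inc: "increasing_on J t" and M: "M \<ge> 1" "Suc M \<in> J"
    and r1: "t 1 \<le> r" and r2: "r < t (Suc M) \<or> (finite J \<and> Suc M = Max J \<and> r = t (Suc M))"
  shows "a (floor_t J t r) + slope_term J a t r = GG a t M r"
  using r2
proof
  assume r: "r < t (Suc M)"
  obtain m where m: "m \<ge> 1" "m < Suc M" "t m \<le> r" "r < t (Suc m)" using ex_seg[of "Suc M" t r] r r1 by auto
  have mJ: "m \<in> J" "Suc m \<in> J" using vJ_down[OF vJ M(2)] m by auto
  show ?thesis using fv_mid[OF inc mJ m(3,4)] G_eq[OF vJ inc M(2) m(1), of r a] m by simp
next
  assume r: "finite J \<and> Suc M = Max J \<and> r = t (Suc M)"
  have MJ: "M \<in> J" using vJ_down[OF vJ M(2)] M by auto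
  have lt: "t M < t (Suc M)" using inc MJ M(2) unfolding increasing_on_def by auto
  have "GG a t M r = a M + sl a t M * (t (Suc M) - t M)"
    using G_eq[OF vJ inc M(2) M(1) order_refl, of r a] r lt by simp
  also have "\<dots> = a (Suc M)" using lt by (simp add: sl_def Delta_def)
  finally show ?thesis using fv_last[of J t a] inc r M(2) by simp
qed

lemma GG_form: "GG a t M r = (a 1 - sl a t 1 * t 1) + sl a t 1 * r +
   (\<Sum>k\<in>{2..M}. (sl a t k - sl a t (k-1)) * max (r - t k) 0)"
  unfolding GG_def by (simp add: algebra_simps)

lemma forward:
  assumes vJ: "valid_index_set J" and inc: "increasing_on J t" and T: "t \<in> T_set J a"
    and len: "length p = n" "length q = n" and sp: "set p \<subseteq> I_set J t" and sq: "set q \<subseteq> I_set J t"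
    and maj: "majorized p q"
  shows "(\<Sum>i<n. a (floor_t J t (p ! i)) + slope_term J a t (p ! i))
       \<le> (\<Sum>i<n. a (floor_t J t (q ! i)) + slope_term J a t (q ! i))"
proof -
  let ?fv = "\<lambda>r. a (floor_t J t r) + slope_term J a t r"
  have main: ?thesis if M: "M \<ge> 1" "Suc M \<in> J" and G: "\<forall>r\<in>set p \<union> set q. ?fv r = GG a t M r" for M
  proof -
    have c: "\<forall>k\<in>{2..M}. sl a t k - sl a t (k-1) \<ge> 0"
    proof
      fix k assume k: "k \<in> {2..M}"
      have "k - 1 \<in> J" "Suc k \<in> J" using vJ_down[OF vJ M(2)] k by auto
      then have "Delta a (k-1) / Delta t (k-1) \<le> Delta a k / Delta t k"
        using T unfolding T_set_def by auto
      then show "sl a t k - sl a t (k-1) \<ge> 0" by (simp add: sl_def)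
    qed
    have "(\<Sum>i<n. ?fv (p ! i)) = (\<Sum>i<length p. GG a t M (p!i))"
      using G len by (intro sum.cong) auto
    also have "\<dots> \<le> (\<Sum>i<length q. GG a t M (q!i))"
      unfolding GG_form by (rule kar[OF maj _ c]) simp
    also have "\<dots> = (\<Sum>i<n. ?fv (q ! i))"
      using G len by (intro sum.cong) auto
    finally show ?thesis .
  qed
  show ?thesis
  proof (cases "finite J")
    case True
    obtain N where N: "J = {1..N}" "N \<ge> 1" "Max J = N" using vJ_fin[OF vJ True] by auto
    have I: "I_set J t = {t 1 .. t N}" using True N by (simp add: I_set_def)
    show ?thesis
    proof (cases "N = 1")
      case True
      have "\<forall>r\<in>set p \<union> set q. r = t 1" using sp sq I True by auto
      then have "p ! i = q ! i" if "i < n" for i using that len by (metis UnI1 UnI2 nth_mem)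
      then show ?thesis by (intro sum_mono) auto
    next
      case False
      show ?thesis
      proof (rule main[of "N - 1"])
        show "N - 1 \<ge> 1" "Suc (N - 1) \<in> J" using N False by auto
        show "\<forall>r\<in>set p \<union> set q. ?fv r = GG a t (N - 1) r"
        proof
          fix r assume "r \<in> set p \<union> set q"
          then have r: "t 1 \<le> r" "r \<le> t N" using sp sq I by auto
          have "r < t (Suc (N-1)) \<or> (finite J \<and> Suc (N-1) = Max J \<and> r = t (Suc (N-1)))"
            using r N False \<open>finite J\<close> by auto
          then show "?fv r = GG a t (N - 1) r"
            by (intro fv_G[OF vJ inc]) (use N False r in auto)
        qed
      qed
    qed
  next
    case False
    have J: "J = {1..}" using vJ_inf[OF vJ False] .
    have I: "I_set J t = {q. t 1 \<le> q \<and> (\<exists>i\<in>J. q < t i)}" using False by (simp add: I_set_def)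
    define S where "S = set p \<union> set q"
    define w where "w = (\<lambda>r. SOME i. i \<in> J \<and> r < t i)"
    have w: "w r \<in> J \<and> r < t (w r)" "t 1 \<le> r" if "r \<in> S" for r
    proof -
      have ex: "\<exists>i. i \<in> J \<and> r < t i" and "t 1 \<le> r" using that sp sq I S_def by auto
      then show "w r \<in> J \<and> r < t (w r)" "t 1 \<le> r" using someI_ex[OF ex] unfolding w_def by auto
    qed
    define L where "L = Max (insert 2 (w ` S))"
    have fin: "finite (insert 2 (w ` S))" by (simp add: S_def)
    have L2: "L \<ge> 2" unfolding L_def using fin by simp
    have Lw: "w r \<le> L" if "r \<in> S" for r unfolding L_def using fin that by simp
    show ?thesis
    proof (rule main[of "L - 1"])
      show "L - 1 \<ge> 1" "Suc (L - 1) \<in> J" using L2 J by auto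
      show "\<forall>r\<in>set p \<union> set q. ?fv r = GG a t (L - 1) r"
      proof
        fix r assume rS: "r \<in> set p \<union> set q"
        then have "r \<in> S" by (simp add: S_def)
        then have "r < t (w r)" "t (w r) \<le> t L" "t 1 \<le> r"
          using w Lw inc_mono[OF inc, of "w r" L] J L2 by auto
        then have "r < t (Suc (L - 1))" using L2 by simp
        then show "?fv r = GG a t (L - 1) r"
          by (intro fv_G[OF vJ inc]) (use L2 J \<open>t 1 \<le> r\<close> in auto)
      qed
    qed
  qed
qed



lemma consec:
  assumes vJ: "valid_index_set J" and inc: "increasing_on J t"
    and H: "\<forall>n\<ge>2. \<forall>p q :: real list.
       length p = n \<and> length q = n \<and> set p \<subseteq> I_set J t \<and> set q \<subseteq> I_set J t \<and> majorized p q
       \<longrightarrow> (\<Sum>i<n. a (floor_t J t (p ! i)) - a (floor_t J t (q ! i)))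
           \<le> (\<Sum>i<n. slope_term J a t (q ! i) - slope_term J a t (p ! i))"
    and k: "k \<in> J" "Suc (Suc k) \<in> J"
  shows "sl a t k \<le> sl a t (Suc k)"
proof (rule ccontr)
  assume neg: "\<not> sl a t k \<le> sl a t (Suc k)"
  have k1: "Suc k \<in> J" using vJ_down[OF vJ k(2)] k(1) vJ_ge1[OF vJ k(1)] by auto
  have lt1: "t k < t (Suc k)" and lt2: "t (Suc k) < t (Suc (Suc k))"
    using inc k k1 unfolding increasing_on_def by auto
  define h where "h = min (t (Suc k) - t k) (t (Suc (Suc k)) - t (Suc k)) / 2"
  have h0: "h > 0" using lt1 lt2 by (simp add: h_def)
  have hl1: "h < t (Suc k) - t k" and hl2: "h < t (Suc (Suc k)) - t (Suc k)" using lt1 lt2 by (auto simp: h_def)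
  define x where "x = t (Suc k)"
  define p where "p = [x, x]"
  define q where "q = [x - h, x + h]"
  have t1k: "t 1 \<le> t k" using inc_mono[OF inc vJ_1[OF vJ] k(1)] vJ_ge1[OF vJ k(1)] by simp
  have inI: "r \<in> I_set J t" if "t k \<le> r" "r < t (Suc (Suc k))" for r
  proof (cases "finite J")
    case True
    have "Suc (Suc k) \<le> Max J" using True k(2) by simp
    then have "t (Suc (Suc k)) \<le> t (Max J)" using inc_mono[OF inc k(2) Max_in[OF True]] True k(2) by auto
    then show ?thesis using True that t1k by (auto simp: I_set_def)
  next
    case False
    then show ?thesis using that t1k k(2) by (auto simp: I_set_def)
  qed
  have sp: "set p \<subseteq> I_set J t" and sq: "set q \<subseteq> I_set J t"
    using inI hl1 hl2 h0 lt1 lt2 by (auto simp: p_def q_def x_def)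
  have maj: "majorized p q" using h0 by (simp add: majorized_def p_def q_def)
  have "(\<Sum>i<2. a (floor_t J t (p ! i)) - a (floor_t J t (q ! i)))
           \<le> (\<Sum>i<2. slope_term J a t (q ! i) - slope_term J a t (p ! i))"
    using H sp sq maj by (auto simp: p_def q_def)
  then have ineq: "2 * (a (floor_t J t x) + slope_term J a t x) \<le>
     (a (floor_t J t (x - h)) + slope_term J a t (x - h)) + (a (floor_t J t (x + h)) + slope_term J a t (x + h))"
    by (simp add: numeral_2_eq_2 p_def q_def)
  have e1: "a (floor_t J t x) + slope_term J a t x = a (Suc k)"
    using fv_mid[OF inc k1 k(2), of x a] lt2 by (simp add: x_def)
  have e2: "a (floor_t J t (x - h)) + slope_term J a t (x - h) = a k + sl a t k * (x - h - t k)"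
    using fv_mid[OF inc k(1) k1, of "x - h" a] hl1 h0 by (simp add: x_def)
  have e3: "a (floor_t J t (x + h)) + slope_term J a t (x + h) = a (Suc k) + sl a t (Suc k) * h"
    using fv_mid[OF inc k1 k(2), of "x + h" a] hl2 h0 by (simp add: x_def)
  have key: "sl a t k * (x - t k) = a (Suc k) - a k"
    using lt1 by (simp add: sl_def Delta_def x_def)
  have "0 \<le> h * (sl a t (Suc k) - sl a t k)"
    using ineq e1 e2 e3 key by (simp add: algebra_simps)
  moreover have "h * (sl a t (Suc k) - sl a t k) < 0" using h0 neg by (simp add: mult_pos_neg)
  ultimately show False by simp
qed

theorem theorem4p8:
  fixes J :: "nat set" and a t :: "nat \<Rightarrow> real"
  assumes "valid_index_set J"
    and "increasing_on J t"
  shows "t \<in> T_set J a \<longleftrightarrow>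
    (\<forall>n\<ge>2. \<forall>p q :: real list.
       length p = n \<and> length q = n \<and> set p \<subseteq> I_set J t \<and> set q \<subseteq> I_set J t \<and> majorized p q
       \<longrightarrow> (\<Sum>i<n. a (floor_t J t (p ! i)) - a (floor_t J t (q ! i)))
           \<le> (\<Sum>i<n. slope_term J a t (q ! i) - slope_term J a t (p ! i)))"
proof
  assume T: "t \<in> T_set J a"
  show "\<forall>n\<ge>2. \<forall>p q :: real list.
       length p = n \<and> length q = n \<and> set p \<subseteq> I_set J t \<and> set q \<subseteq> I_set J t \<and> majorized p q
       \<longrightarrow> (\<Sum>i<n. a (floor_t J t (p ! i)) - a (floor_t J t (q ! i)))
           \<le> (\<Sum>i<n. slope_term J a t (q ! i) - slope_term J a t (p ! i))"
  proof (intro allI impI, elim conjE)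
    fix n :: nat and p q :: "real list"
    assume "length p = n" "length q = n" "set p \<subseteq> I_set J t" "set q \<subseteq> I_set J t" "majorized p q"
    from forward[OF assms T this]
    show "(\<Sum>i<n. a (floor_t J t (p ! i)) - a (floor_t J t (q ! i)))
           \<le> (\<Sum>i<n. slope_term J a t (q ! i) - slope_term J a t (p ! i))"
      by (simp add: sum.distrib sum_subtractf)
  qed
next
  assume H: "\<forall>n\<ge>2. \<forall>p q :: real list.
       length p = n \<and> length q = n \<and> set p \<subseteq> I_set J t \<and> set q \<subseteq> I_set J t \<and> majorized p q
       \<longrightarrow> (\<Sum>i<n. a (floor_t J t (p ! i)) - a (floor_t J t (q ! i)))
           \<le> (\<Sum>i<n. slope_term J a t (q ! i) - slope_term J a t (p ! i))"
  have C: "sl a t k \<le> sl a t (Suc k)" if "k \<in> J" "Suc (Suc k) \<in> J" for k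
    using consec[OF assms H that] .
  have "sl a t i \<le> sl a t j" if ij: "i \<in> J" "Suc j \<in> J" "i \<le> j" for i j
    using ij(3)
  proof (induction j rule: dec_induct)
    case base then show ?case by simp
  next
    case (step m)
    have "m \<in> J" using vJ_down[OF assms(1) ij(1)] vJ_ge1[OF assms(1) ij(1)] step.hyps
      by (metis vJ_down[OF assms(1) ij(2)] le_trans less_imp_le_nat le_SucI)
    moreover have "Suc (Suc m) \<in> J" using vJ_down[OF assms(1) ij(2)] step.hyps by simp
    ultimately show ?case using C step.IH by (meson order_trans)
  qed
  then show "t \<in> T_set J a" using assms(2) unfolding T_set_def sl_def by auto
qed


end
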